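(* For $n\ge1$, the number of permutations $\pi\in Av_n(132)$ such that every permutation $\tilde r_\pi(\pi_i)$ ($1\le i\le n$) of size greater than one contains the pattern $231$ equals the coefficient of $x^n$ in $$\frac{1-2x-\sqrt{1-4x+8x^3}}{2x}.$$
   Context: $Av_n(\sigma)$ is the set of permutations of $\{1,\dots,n\}$ avoiding the pattern $\sigma$. For a permutation $\pi=\pi_1\cdots\pi_n$ and an entry $\pi_i$, $r_\pi(\pi_i)$ is the set of entries $\pi_k$ such that $\pi_k\le\pi_i$ and all entries of $\pi$ lying (in position) between $\pi_k$ and $\pi_i$ are $\le\pi_i$ (so $\pi_i\in r_\pi(\pi_i)$); $\tilde r_\pi(\pi_i)$ is the permutation obtained by taking the entries of $r_\pi(\pi_i)$ in their order of appearance in $\pi$ and standardizing them to $1,\dots,|r_\pi(\pi_i)|$. *)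

theory Defs
  imports Complex_Main "HOL-Computational_Algebra.Formal_Power_Series"
begin

text \<open>Permutations of {1..n} are lists of length n (one-line notation, 0-indexed positions).\<close>
definition is_perm :: "nat \<Rightarrow> nat list \<Rightarrow> bool" where
  "is_perm n \<pi> \<longleftrightarrow> length \<pi> = n \<and> distinct \<pi> \<and> set \<pi> = {1..n}"

definition contains :: "nat list \<Rightarrow> nat list \<Rightarrow> bool" where
  "contains \<pi> \<sigma> \<longleftrightarrow> (\<exists>idx :: nat \<Rightarrow> nat.
      strict_mono_on {..<length \<sigma>} idx \<and>
      (\<forall>a<length \<sigma>. idx a < length \<pi>) \<and>
      (\<forall>a<length \<sigma>. \<forall>b<length \<sigma>. (\<pi> ! idx a < \<pi> ! idx b \<longleftrightarrow> \<sigma> ! a < \<sigma> ! b)))"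

definition Av :: "nat \<Rightarrow> nat list \<Rightarrow> nat list set" where
  "Av n \<sigma> = {\<pi>. is_perm n \<pi> \<and> \<not> contains \<pi> \<sigma>}"

definition r_pos :: "nat list \<Rightarrow> nat \<Rightarrow> nat set" where
  "r_pos \<pi> i = {k. k < length \<pi> \<and> \<pi> ! k \<le> \<pi> ! i \<and>
      (\<forall>j. min k i < j \<and> j < max k i \<longrightarrow> \<pi> ! j \<le> \<pi> ! i)}"

definition standardize :: "nat list \<Rightarrow> nat list" where
  "standardize xs = map (\<lambda>x. card {y \<in> set xs. y \<le> x}) xs"

definition r_tilde :: "nat list \<Rightarrow> nat \<Rightarrow> nat list" where
  "r_tilde \<pi> i = standardize (nths \<pi> (r_pos \<pi> i))"

text \<open>The generating function (1 - 2x - sqrt(1 - 4x + 8x^3)) / (2x), where the square root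
  is the formal power series square root with constant term 1.\<close>
definition gf6 :: "real fps" where
  "gf6 = (1 - 2 * fps_X - fps_radical (\<lambda>k x. root k x) 2 (1 - 4 * fps_X + 8 * fps_X ^ 3))
          / (2 * fps_X)"

end

theory Submission
  imports Defs
begin


definition oiso :: "(nat \<Rightarrow> nat) \<Rightarrow> nat set \<Rightarrow> bool" where
  "oiso f A \<longleftrightarrow> (\<forall>a\<in>A. \<forall>b\<in>A. f a < f b \<longleftrightarrow> a < b)"

lemma oiso_le: "oiso f A \<Longrightarrow> a \<in> A \<Longrightarrow> b \<in> A \<Longrightarrow> f a \<le> f b \<longleftrightarrow> a \<le> b"
  unfolding oiso_def by (meson not_le)

lemma oiso_inj: "oiso f A \<Longrightarrow> inj_on f A"
  unfolding oiso_def inj_on_def by (metis nat_neq_iff)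

lemma oiso_subset: "oiso f A \<Longrightarrow> B \<subseteq> A \<Longrightarrow> oiso f B"
  unfolding oiso_def by blast

lemma oiso_add: "oiso (\<lambda>x. x + t) A"
  unfolding oiso_def by auto

lemma contains_map:
  assumes "oiso f (set xs)"
  shows "contains (map f xs) \<sigma> \<longleftrightarrow> contains xs \<sigma>"
proof -
  have "(\<forall>a<length \<sigma>. \<forall>b<length \<sigma>. (map f xs ! idx a < map f xs ! idx b \<longleftrightarrow> \<sigma> ! a < \<sigma> ! b))
     \<longleftrightarrow> (\<forall>a<length \<sigma>. \<forall>b<length \<sigma>. (xs ! idx a < xs ! idx b \<longleftrightarrow> \<sigma> ! a < \<sigma> ! b))"
    if "\<forall>a<length \<sigma>. idx a < length xs" for idx
    using that assms unfolding oiso_def by (auto simp: nth_mem)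
  then show ?thesis unfolding contains_def by (auto simp del: nth_map)
qed

lemma r_pos_map:
  assumes "oiso f (set xs)" "i < length xs"
  shows "r_pos (map f xs) i = r_pos xs i"
proof -
  have "\<And>j. j < length xs \<Longrightarrow> f (xs ! j) \<le> f (xs ! i) \<longleftrightarrow> xs ! j \<le> xs ! i"
    using assms by (simp add: oiso_le nth_mem)
  then show ?thesis unfolding r_pos_def using assms(2)
    by (auto simp: max_def min_def split: if_splits)
qed

lemma standardize_map:
  assumes "oiso f (set xs)"
  shows "standardize (map f xs) = standardize xs"
proof -
  have "card {y \<in> set (map f xs). y \<le> f x} = card {y \<in> set xs. y \<le> x}" if x: "x \<in> set xs" for x
  proof -
    have "{y \<in> set (map f xs). y \<le> f x} = f ` {y \<in> set xs. y \<le> x}"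
      using assms x by (auto simp: oiso_le)
    moreover have "inj_on f {y \<in> set xs. y \<le> x}"
      using oiso_inj[OF assms] by (rule inj_on_subset) auto
    ultimately show ?thesis by (simp add: card_image)
  qed
  then show ?thesis unfolding standardize_def by simp
qed

lemma r_tilde_map:
  assumes "oiso f (set xs)" "i < length xs"
  shows "r_tilde (map f xs) i = r_tilde xs i"
  unfolding r_tilde_def r_pos_map[OF assms] nths_map
  by (rule standardize_map, rule oiso_subset[OF assms(1)], rule set_nths_subset)

definition good :: "nat list \<Rightarrow> bool" where
  "good \<pi> \<longleftrightarrow> (\<forall>i<length \<pi>. length (r_tilde \<pi> i) > 1 \<longrightarrow> contains (r_tilde \<pi> i) [2, 3, 1])"

lemma good_map: "oiso f (set xs) \<Longrightarrow> good (map f xs) \<longleftrightarrow> good xs"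
  unfolding good_def by (simp add: r_tilde_map)

lemma contains_standardize: "contains (standardize xs) \<sigma> \<longleftrightarrow> contains xs \<sigma>"
proof -
  define g where "g x = card {y \<in> set xs. y \<le> x}" for x
  have "oiso g (set xs)"
  proof -
    have lt: "g a < g b" if "a \<in> set xs" "b \<in> set xs" "a < b" for a b
    proof -
      have "{y \<in> set xs. y \<le> a} \<subseteq> {y \<in> set xs. y \<le> b}" using that by auto
      moreover have "b \<in> {y \<in> set xs. y \<le> b} - {y \<in> set xs. y \<le> a}" using that by auto
      ultimately have "{y \<in> set xs. y \<le> a} \<subset> {y \<in> set xs. y \<le> b}" by blast
      then show ?thesis unfolding g_def by (intro psubset_card_mono) auto
    qed
    show ?thesis unfolding oiso_def by (metis lt nat_neq_iff order.asym)
  qed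
  moreover have "standardize xs = map g xs" unfolding standardize_def g_def ..
  ultimately show ?thesis by (simp add: contains_map)
qed

lemma contains_length: "contains xs \<sigma> \<Longrightarrow> length \<sigma> \<le> length xs"
proof -
  assume "contains xs \<sigma>"
  then obtain idx where sm: "strict_mono_on {..<length \<sigma>} idx" and lt: "\<forall>a<length \<sigma>. idx a < length xs"
    unfolding contains_def by blast
  have "card {..<length \<sigma>} \<le> card {..<length xs}"
    by (rule card_inj_on_le[OF strict_mono_on_imp_inj_on[OF sm]]) (use lt in auto)
  then show ?thesis by simp
qed

lemma contains_append_left: "contains xs \<sigma> \<Longrightarrow> contains (xs @ ys) \<sigma>"
  unfolding contains_def by (metis (no_types, lifting) length_append nth_append trans_less_add1)

lemma contains_append_right: "contains ys \<sigma> \<Longrightarrow> contains (xs @ ys) \<sigma>"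
proof -
  assume "contains ys \<sigma>"
  then obtain idx where sm: "strict_mono_on {..<length \<sigma>} idx" and lt: "\<forall>a<length \<sigma>. idx a < length ys"
    and c: "\<forall>a<length \<sigma>. \<forall>b<length \<sigma>. (ys ! idx a < ys ! idx b \<longleftrightarrow> \<sigma> ! a < \<sigma> ! b)"
    unfolding contains_def by blast
  show ?thesis unfolding contains_def
  proof (intro exI[of _ "\<lambda>a. idx a + length xs"] conjI allI impI)
    show "strict_mono_on {..<length \<sigma>} (\<lambda>a. idx a + length xs)"
      using sm unfolding strict_mono_on_def by auto
  qed (use lt c in \<open>auto simp: nth_append\<close>)
qed

lemma contains_restrict_left:
  assumes "strict_mono_on {..<length \<sigma>} idx" "\<forall>a<length \<sigma>. idx a < length xs"
    "\<forall>a<length \<sigma>. \<forall>b<length \<sigma>. ((xs @ ys) ! idx a < (xs @ ys) ! idx b \<longleftrightarrow> \<sigma> ! a < \<sigma> ! b)"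
  shows "contains xs \<sigma>"
  unfolding contains_def using assms by (intro exI[of _ idx]) (auto simp: nth_append)

lemma contains_restrict_right:
  assumes "strict_mono_on {..<length \<sigma>} idx" "\<forall>a<length \<sigma>. length xs \<le> idx a \<and> idx a < length (xs @ ys)"
    "\<forall>a<length \<sigma>. \<forall>b<length \<sigma>. ((xs @ ys) ! idx a < (xs @ ys) ! idx b \<longleftrightarrow> \<sigma> ! a < \<sigma> ! b)"
  shows "contains ys \<sigma>"
  unfolding contains_def
proof (intro exI[of _ "\<lambda>a. idx a - length xs"] conjI allI impI)
  show "strict_mono_on {..<length \<sigma>} (\<lambda>a. idx a - length xs)"
    using assms(1,2) unfolding strict_mono_on_def by (auto intro!: diff_less_mono)
next
  fix a assume "a < length \<sigma>" then show "idx a - length xs < length ys" using assms(2) by force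
next
  fix a b assume ab: "a < length \<sigma>" "b < length \<sigma>"
  then have "(xs @ ys) ! idx a = ys ! (idx a - length xs)" "(xs @ ys) ! idx b = ys ! (idx b - length xs)"
    using assms(2) by (auto simp: nth_append)
  then show "(ys ! (idx a - length xs) < ys ! (idx b - length xs)) = (\<sigma> ! a < \<sigma> ! b)"
    using assms(3) ab by metis
qed

lemma contains3:
  assumes "i < j" "j < k" "k < length xs" "length \<sigma> = 3"
    "\<forall>a<3. \<forall>b<3. (xs ! ([i,j,k] ! a) < xs ! ([i,j,k] ! b) \<longleftrightarrow> \<sigma> ! a < \<sigma> ! b)"
  shows "contains xs \<sigma>"
  unfolding contains_def
proof (intro exI[of _ "\<lambda>a. [i,j,k] ! a"] conjI allI impI)
  show "strict_mono_on {..<length \<sigma>} (\<lambda>a. [i, j, k] ! a)"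
    unfolding strict_mono_on_def assms(4) using assms(1,2)
    by (auto simp: numeral_3_eq_3 less_Suc_eq nth_Cons split: nat.splits)
  show "[i, j, k] ! a < length xs" if "a < length \<sigma>" for a
    using that assms by (auto simp: numeral_3_eq_3 less_Suc_eq)
qed (use assms in auto)

lemma r_pos_left:
  assumes i: "i < length xs" and ys: "ys \<noteq> []" and lt: "xs ! i < hd ys"
  shows "r_pos (xs @ ys) i = r_pos xs i"
proof (intro set_eqI iffI)
  fix k assume k: "k \<in> r_pos (xs @ ys) i"
  have hd: "(xs @ ys) ! length xs = hd ys" using ys by (simp add: nth_append hd_conv_nth)
  have xi: "(xs @ ys) ! i = xs ! i" using i by (simp add: nth_append)
  have "k < length xs"
  proof (rule ccontr)
    assume "\<not> k < length xs"
    then consider "k = length xs" | "length xs < k" by linarith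
    then show False
    proof cases
      case 1 then show ?thesis using k hd xi lt unfolding r_pos_def by auto
    next
      case 2
      then have "(xs @ ys) ! length xs \<le> (xs @ ys) ! i" using k i unfolding r_pos_def by auto
      then show ?thesis using hd xi lt by auto
    qed
  qed
  have B: "\<forall>j. min k i < j \<and> j < max k i \<longrightarrow> (xs @ ys) ! j \<le> (xs @ ys) ! i"
    using k unfolding r_pos_def by blast
  have C: "xs ! j \<le> xs ! i" if "min k i < j \<and> j < max k i" for j
  proof -
    have "j < length xs" using that \<open>k < length xs\<close> i by linarith
    then show ?thesis using B[rule_format, OF that] i by (simp add: nth_append)
  qed
  have D: "xs ! k \<le> xs ! i" using k \<open>k < length xs\<close> i unfolding r_pos_def by (simp add: nth_append)
  show "k \<in> r_pos xs i" unfolding r_pos_def using C D \<open>k < length xs\<close> by blast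
next
  fix k assume k: "k \<in> r_pos xs i"
  then show "k \<in> r_pos (xs @ ys) i" using i unfolding r_pos_def by (auto simp: nth_append)
qed

lemma r_pos_right:
  assumes q: "q < length ys" and xs: "xs \<noteq> []" and lt: "ys ! q < last xs"
  shows "r_pos (xs @ ys) (length xs + q) = (\<lambda>k. length xs + k) ` r_pos ys q"
proof (intro set_eqI iffI)
  fix k assume k: "k \<in> r_pos (xs @ ys) (length xs + q)"
  have la: "(xs @ ys) ! (length xs - 1) = last xs" using xs by (simp add: nth_append last_conv_nth)
  have xi: "(xs @ ys) ! (length xs + q) = ys ! q" by (simp add: nth_append)
  have "length xs \<le> k"
  proof (rule ccontr)
    assume "\<not> length xs \<le> k"
    then consider "k = length xs - 1" | "k < length xs - 1" by linarith
    then show False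
    proof cases
      case 1 then show ?thesis using k la xi lt unfolding r_pos_def by auto
    next
      case 2
      then have "(xs @ ys) ! (length xs - 1) \<le> (xs @ ys) ! (length xs + q)"
        using k unfolding r_pos_def by auto
      then show ?thesis using la xi lt by auto
    qed
  qed
  then obtain k' where k': "k = length xs + k'" using le_Suc_ex by blast
  have "k' \<in> r_pos ys q"
    unfolding r_pos_def
  proof (intro CollectI conjI allI impI)
    show "k' < length ys" using k k' unfolding r_pos_def by auto
    show "ys ! k' \<le> ys ! q" using k k' unfolding r_pos_def by (auto simp: nth_append)
    fix j assume j: "min k' q < j \<and> j < max k' q"
    have B: "\<forall>j. min k (length xs + q) < j \<and> j < max k (length xs + q) \<longrightarrow> (xs @ ys) ! j \<le> (xs @ ys) ! (length xs + q)"
      using k unfolding r_pos_def by blast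
    have "min k (length xs + q) < length xs + j \<and> length xs + j < max k (length xs + q)"
      using j k' by (auto simp: min_def max_def split: if_splits)
    from B[rule_format, OF this] have "(xs @ ys) ! (length xs + j) \<le> (xs @ ys) ! (length xs + q)" .
    then show "ys ! j \<le> ys ! q" by (simp add: nth_append)
  qed
  then show "k \<in> (\<lambda>k. length xs + k) ` r_pos ys q" using k' by blast
next
  fix k assume "k \<in> (\<lambda>k. length xs + k) ` r_pos ys q"
  then obtain k' where k': "k = length xs + k'" "k' \<in> r_pos ys q" by blast
  show "k \<in> r_pos (xs @ ys) (length xs + q)"
    unfolding r_pos_def
  proof (intro CollectI conjI allI impI)
    show "k < length (xs @ ys)" using k' unfolding r_pos_def by auto
    show "(xs @ ys) ! k \<le> (xs @ ys) ! (length xs + q)" using k' unfolding r_pos_def by (auto simp: nth_append)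
    fix j assume j: "min k (length xs + q) < j \<and> j < max k (length xs + q)"
    have "length xs \<le> j" using j k'(1) by (cases "k' \<le> q") (auto simp: min_def)
    then obtain j' where j': "j = length xs + j'" using le_Suc_ex by blast
    then have "min k' q < j' \<and> j' < max k' q" using j k' by (auto simp: min_def max_def split: if_splits)
    then have "ys ! j' \<le> ys ! q" using k' unfolding r_pos_def by auto
    then show "(xs @ ys) ! j \<le> (xs @ ys) ! (length xs + q)" using j' by (simp add: nth_append)
  qed
qed

lemma r_pos_max:
  assumes "i < length xs" "\<forall>x\<in>set xs. x \<le> xs ! i"
  shows "r_pos xs i = {..<length xs}"
  using assms unfolding r_pos_def by (auto simp: nth_mem max_def min_def)

lemma r_tilde_max:
  assumes "i < length xs" "\<forall>x\<in>set xs. x \<le> xs ! i"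
  shows "r_tilde xs i = standardize xs"
  unfolding r_tilde_def r_pos_max[OF assms] by simp

lemma r_tilde_left:
  assumes i: "i < length xs" and ys: "ys \<noteq> []" and lt: "xs ! i < hd ys"
  shows "r_tilde (xs @ ys) i = r_tilde xs i"
proof -
  have "{j. j + length xs \<in> r_pos xs i} = {}" unfolding r_pos_def by auto
  then show ?thesis unfolding r_tilde_def r_pos_left[OF assms] nths_append by simp
qed

lemma r_tilde_right:
  assumes q: "q < length ys" and xs: "xs \<noteq> []" and lt: "ys ! q < last xs"
  shows "r_tilde (xs @ ys) (length xs + q) = r_tilde ys q"
proof -
  have "nths (xs @ ys) ((\<lambda>k. length xs + k) ` r_pos ys q) = nths ys (r_pos ys q)"
    using nths_drop[of "length xs" "xs @ ys" "r_pos ys q"] by simp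
  then show ?thesis unfolding r_tilde_def r_pos_right[OF assms] by simp
qed

lemma all_split3:
  "(\<forall>i<length (a @ n # b). Q i) \<longleftrightarrow> (\<forall>i<length a. Q i) \<and> Q (length a) \<and> (\<forall>q<length b. Q (length a + 1 + q))"
proof (intro iffI allI impI conjI)
  fix i assume A: "(\<forall>i<length a. Q i) \<and> Q (length a) \<and> (\<forall>q<length b. Q (length a + 1 + q))"
    and i: "i < length (a @ n # b)"
  consider "i < length a" | "i = length a" | "length a < i" by linarith
  then show "Q i"
  proof cases
    case 3
    then obtain q where "i = length a + 1 + q" using le_Suc_ex[of "Suc (length a)" i] by auto
    then show ?thesis using A i by auto
  qed (use A in auto)
qed auto

lemma good_split:
  assumes an: "\<forall>x\<in>set a. x < n" and bn: "\<forall>x\<in>set b. x < n"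
  shows "good (a @ n # b) \<longleftrightarrow> good a \<and> good b \<and> (1 < length (a @ n # b) \<longrightarrow> contains (a @ n # b) [2,3,1])"
proof -
  define \<pi> where "\<pi> = a @ n # b"
  define P where "P t \<longleftrightarrow> (1 < length t \<longrightarrow> contains t [2,3,1])" for t
  have gd: "good xs \<longleftrightarrow> (\<forall>i<length xs. P (r_tilde xs i))" for xs unfolding good_def P_def by blast
  have L: "r_tilde \<pi> i = r_tilde a i" if "i < length a" for i
    unfolding \<pi>_def by (rule r_tilde_left) (use that an in \<open>auto simp: nth_mem\<close>)
  have M: "r_tilde \<pi> (length a) = standardize \<pi>"
    unfolding \<pi>_def by (rule r_tilde_max) (use an bn in \<open>auto simp: nth_append less_imp_le\<close>)
  have R: "r_tilde \<pi> (length a + 1 + q) = r_tilde b q" if "q < length b" for q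
  proof -
    have "r_tilde ((a @ [n]) @ b) (length (a @ [n]) + q) = r_tilde b q"
      by (rule r_tilde_right) (use that bn in \<open>auto simp: nth_mem\<close>)
    then show ?thesis unfolding \<pi>_def by simp
  qed
  have "P (standardize \<pi>) \<longleftrightarrow> (1 < length \<pi> \<longrightarrow> contains \<pi> [2,3,1])"
    unfolding P_def standardize_def[of \<pi>] using contains_standardize[of \<pi>] unfolding standardize_def by simp
  then show ?thesis unfolding gd \<pi>_def[symmetric] unfolding \<pi>_def all_split3 unfolding \<pi>_def[symmetric]
    using L M R by auto
qed

lemma avoid_split:
  assumes an: "\<forall>x\<in>set a. x < n" and bn: "\<forall>x\<in>set b. x < n" and ab: "\<forall>x\<in>set a. \<forall>y\<in>set b. y < x"
  shows "contains (a @ n # b) [1,3,2] \<longleftrightarrow> contains a [1,3,2] \<or> contains b [1,3,2]"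
proof
  assume "contains a [1,3,2] \<or> contains b [1,3,2]"
  then show "contains (a @ n # b) [1,3,2]"
    using contains_append_left[of a _ "n # b"] contains_append_right[of b _ "a @ [n]"] by auto
next
  assume "contains (a @ n # b) [1,3,2]"
  then obtain idx where sm: "strict_mono_on {..<length [1,3,2::nat]} idx"
    and lt: "\<forall>i<length [1,3,2::nat]. idx i < length (a @ n # b)"
    and c: "\<forall>i<length [1,3,2::nat]. \<forall>j<length [1,3,2::nat]. ((a @ n # b) ! idx i < (a @ n # b) ! idx j \<longleftrightarrow> [1,3,2::nat] ! i < [1,3,2] ! j)"
    unfolding contains_def by blast
  define \<pi> where "\<pi> = a @ n # b"
  have V: "(k < length a \<longrightarrow> \<pi> ! k \<in> set a) \<and> (k = length a \<longrightarrow> \<pi> ! k = n) \<and> (length a < k \<longrightarrow> \<pi> ! k \<in> set b)"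
    if "k < length \<pi>" for k
    using that unfolding \<pi>_def by (auto simp: nth_append nth_Cons split: nat.splits)
  have i01: "idx 0 < idx 1" and i12: "idx 1 < idx 2" using sm unfolding strict_mono_on_def by auto
  have l2: "idx 2 < length \<pi>" using lt unfolding \<pi>_def by auto
  have v01: "\<pi> ! idx 0 < \<pi> ! idx 1" and v02: "\<pi> ! idx 0 < \<pi> ! idx 2" and v21: "\<pi> ! idx 2 < \<pi> ! idx 1"
    using c unfolding \<pi>_def by (auto dest: spec[of _ 0] spec[of _ 1] spec[of _ 2])
  have all3: "\<forall>i<length [1,3,2::nat]. idx 0 \<le> idx i \<and> idx i \<le> idx 2"
    using i01 i12 by (auto simp: less_Suc_eq numeral_2_eq_2)
  have allle: "\<forall>x\<in>set \<pi>. x \<le> n" using an bn unfolding \<pi>_def by (auto simp: less_imp_le)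
  consider "idx 2 < length a" | "length a < idx 0" | "idx 0 \<le> length a \<and> length a \<le> idx 2" by linarith
  then show "contains a [1,3,2] \<or> contains b [1,3,2]"
  proof cases
    case 1
    have "contains a [1,3,2]"
      by (rule contains_restrict_left[OF sm, of a "n # b"]) (use all3 1 c in auto)
    then show ?thesis ..
  next
    case 2
    have "contains b [1,3,2]"
    proof (rule contains_restrict_right[OF sm, of "a @ [n]" b])
      show "\<forall>i<length [1, 3, 2::nat]. length (a @ [n]) \<le> idx i \<and> idx i < length ((a @ [n]) @ b)"
        using all3 2 lt by auto
      show "\<forall>i<length [1, 3, 2::nat]. \<forall>j<length [1, 3, 2::nat]. (((a @ [n]) @ b) ! idx i < ((a @ [n]) @ b) ! idx j) = ([1, 3, 2::nat] ! i < [1, 3, 2] ! j)"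
        using c by simp
    qed
    then show ?thesis ..
  next
    case 3
    have l1: "idx 1 < length \<pi>" and l0: "idx 0 < length \<pi>" using l2 i01 i12 by auto
    have "idx 0 = length a \<or> (idx 0 < length a \<and> idx 2 = length a) \<or> (idx 0 < length a \<and> length a < idx 2)"
      using 3 by auto
    then have False
    proof (elim disjE conjE)
      assume "idx 0 = length a"
      then have "\<pi> ! idx 0 = n" using V[OF l0] by auto
      moreover have "\<pi> ! idx 1 \<le> n" using allle l1 by (simp add: nth_mem)
      ultimately show False using v01 by simp
    next
      assume "idx 2 = length a"
      then have "\<pi> ! idx 2 = n" using V[OF l2] by auto
      moreover have "\<pi> ! idx 1 \<le> n" using allle l1 by (simp add: nth_mem)
      ultimately show False using v21 by simp
    next
      assume "idx 0 < length a" "length a < idx 2"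
      then have "\<pi> ! idx 0 \<in> set a" "\<pi> ! idx 2 \<in> set b" using V[OF l0] V[OF l2] by auto
      then show False using ab v02 by fastforce
    qed
    then show ?thesis ..
  qed
qed

definition S :: "nat \<Rightarrow> nat list set" where
  "S n = {\<pi>. is_perm n \<pi> \<and> \<not> contains \<pi> [1,3,2] \<and> good \<pi>}"

definition J :: "nat \<Rightarrow> nat \<Rightarrow> nat list \<Rightarrow> nat list \<Rightarrow> nat list" where
  "J n k a b = map (\<lambda>x. x + (n - 1 - k)) a @ n # b"

definition T :: "nat \<Rightarrow> nat \<Rightarrow> (nat list \<times> nat list) set" where
  "T n k = {(a, b). a \<in> S k \<and> b \<in> S (n - 1 - k) \<and> (2 \<le> n \<longrightarrow> contains (J n k a b) [2,3,1])}"

lemma J_in_S: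
  assumes k: "k < n" and a: "a \<in> S k" and b: "b \<in> S (n - 1 - k)"
    and c: "2 \<le> n \<longrightarrow> contains (J n k a b) [2,3,1]"
  shows "J n k a b \<in> S n"
proof -
  define t where "t = n - 1 - k"
  define a' where "a' = map (\<lambda>x. x + t) a"
  have pa: "is_perm k a" and pb: "is_perm t b" using a b unfolding S_def t_def by auto
  have "set a' = (\<lambda>x. x + t) ` {1..k}" using pa unfolding a'_def is_perm_def by simp
  also have "\<dots> = {1 + t..k + t}" by (rule image_add_atLeastAtMost')
  also have "k + t = n - 1" using k t_def by simp
  finally have sa: "set a' = {t + 1..n - 1}" by simp
  have sb: "set b = {1..t}" using pb unfolding is_perm_def by auto
  have an: "\<forall>x\<in>set a'. x < n" and bn: "\<forall>x\<in>set b. x < n" using sa sb k t_def by auto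
  have ab: "\<forall>x\<in>set a'. \<forall>y\<in>set b. y < x" using sa sb by auto
  have Jd: "J n k a b = a' @ n # b" unfolding J_def a'_def t_def ..
  have ip: "is_perm n (a' @ n # b)"
  proof -
    have "length (a' @ n # b) = n" using pa pb k unfolding is_perm_def a'_def t_def by auto
    moreover have "distinct (a' @ n # b)"
      using pa pb an bn ab unfolding is_perm_def a'_def
      by (auto simp: distinct_map inj_on_def) 
    moreover have "set (a' @ n # b) = {1..n}" using sa sb k t_def by auto
    ultimately show ?thesis unfolding is_perm_def by blast
  qed
  moreover have "\<not> contains (a' @ n # b) [1,3,2]"
    using avoid_split[OF an bn ab] a b contains_map[OF oiso_add] unfolding S_def a'_def t_def by auto
  moreover have "good (a' @ n # b)"
  proof -
    have "good a'" using a good_map[OF oiso_add] unfolding S_def a'_def by auto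
    moreover have "1 < length (a' @ n # b) \<longrightarrow> contains (a' @ n # b) [2,3,1]"
      using c ip unfolding Jd is_perm_def by auto
    ultimately show ?thesis using good_split[OF an bn] b unfolding S_def by auto
  qed
  ultimately show ?thesis unfolding Jd S_def by blast
qed

lemma S_decomp:
  assumes pi: "\<pi> \<in> S n" and n: "1 \<le> n"
  shows "\<exists>k<n. \<exists>a b. (a, b) \<in> T n k \<and> \<pi> = J n k a b"
proof -
  have ip: "is_perm n \<pi>" and av: "\<not> contains \<pi> [1,3,2]" and gd: "good \<pi>" using pi unfolding S_def by auto
  have "n \<in> set \<pi>" using ip n unfolding is_perm_def by auto
  then obtain m where m: "m < length \<pi>" "\<pi> ! m = n" by (auto simp: in_set_conv_nth)
  have ln: "length \<pi> = n" using ip unfolding is_perm_def by auto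
  define a' where "a' = take m \<pi>"
  define b where "b = drop (Suc m) \<pi>"
  define t where "t = n - 1 - m"
  have pd: "\<pi> = a' @ n # b" unfolding a'_def b_def using id_take_nth_drop[OF m(1)] m(2) by simp
  have la: "length a' = m" and lb: "length b = t" using m ln unfolding a'_def b_def t_def by auto
  have dist: "distinct (a' @ n # b)" using ip pd unfolding is_perm_def by auto
  have U0: "set (a' @ n # b) = {1..n}" using ip pd unfolding is_perm_def by auto
  have U: "set a' \<union> set b = {1..n-1}"
  proof -
    have nn: "n \<notin> set a'" "n \<notin> set b" using dist by auto
    have "set a' \<union> set b = {1..n} - {n}" using U0[symmetric] nn by auto
    also have "{1..n} - {n} = {1..n-1}" using n by auto
    finally show ?thesis .
  qed
  have U': "x \<in> set a' \<or> x \<in> set b \<Longrightarrow> 1 \<le> x \<and> x \<le> n - 1" for x using U by auto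
  have an: "\<forall>x\<in>set a'. x < n" and bn: "\<forall>x\<in>set b. x < n" using U' n by fastforce+
  have ab: "\<forall>x\<in>set a'. \<forall>y\<in>set b. y < x"
  proof (intro ballI, rule ccontr)
    fix x y assume x: "x \<in> set a'" and y: "y \<in> set b" and "\<not> y < x"
    moreover have "x \<noteq> y" using dist x y by auto
    ultimately have xy: "x < y" by simp
    obtain p where p: "p < m" "a' ! p = x" using x la by (auto simp: in_set_conv_nth)
    obtain q where q: "q < t" "b ! q = y" using y lb by (auto simp: in_set_conv_nth)
    have v: "\<pi> ! p = x" "\<pi> ! m = n" "\<pi> ! (m + 1 + q) = y"
      using p q la m(2) unfolding pd by (auto simp: nth_append)
    have "contains \<pi> [1,3,2]"
    proof (rule contains3[of p m "m + 1 + q"])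
      show "p < m" "m < m + 1 + q" using p by auto
      show "m + 1 + q < length \<pi>" using q la lb unfolding pd by simp
      show "length [1, 3, 2::nat] = 3" by simp
      show "\<forall>i<3. \<forall>j<3. (\<pi> ! ([p, m, m + 1 + q] ! i) < \<pi> ! ([p, m, m + 1 + q] ! j)) = ([1, 3, 2::nat] ! i < [1, 3, 2] ! j)"
        using v xy an bn x y by (auto simp: numeral_3_eq_3 less_Suc_eq)
    qed
    then show False using av by simp
  qed
  have fin: "finite (set b)" by simp
  have cb: "card (set b) = t" using dist lb by (simp add: distinct_card)
  have sb_sub: "set b \<subseteq> {1..t}"
  proof
    fix y assume y: "y \<in> set b"
    have y1: "1 \<le> y" using y U by auto
    have "y \<le> t"
    proof (rule ccontr)
      assume "\<not> y \<le> t"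
      have "{1..y} \<subseteq> set b"
      proof
        fix z assume z: "z \<in> {1..y}"
        have "y \<le> n - 1" using y U by auto
        then have "z \<in> set a' \<union> set b" using U z by auto
        moreover have "z \<notin> set a'"
        proof
          assume "z \<in> set a'"
          then have "y < z" using ab y by blast
          then show False using z by simp
        qed
        ultimately show "z \<in> set b" by blast
      qed
      then have "card {1..y} \<le> card (set b)" by (rule card_mono[OF fin])
      then show False using cb \<open>\<not> y \<le> t\<close> by simp
    qed
    then show "y \<in> {1..t}" using y1 by simp
  qed
  have sb: "set b = {1..t}" by (rule card_subset_eq[OF finite_atLeastAtMost sb_sub]) (simp add: cb)
  have sa': "set a' = {t + 1..n - 1}"
  proof -
    have disj: "set a' \<inter> set b = {}" using dist by auto
    have "set a' = (set a' \<union> set b) - set b" using disj by blast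
    then have "set a' = {1..n-1} - set b" using U by simp
    moreover have "{1..n-1} - {1..t} = {t+1..n-1}" by auto
    ultimately show ?thesis unfolding sb by simp
  qed
  define a where "a = map (\<lambda>x. x - t) a'"
  have a'a: "a' = map (\<lambda>x. x + t) a"
    unfolding a_def map_map o_def by (rule map_idI[symmetric]) (use sa' in auto)
  have "(\<lambda>x. x + t) ` set a = (\<lambda>x. x + t) ` {1..m}"
  proof -
    have "(\<lambda>x. x + t) ` set a = set a'" using a'a by simp
    also have "\<dots> = {1 + t..m + t}" using sa' m ln t_def by auto
    also have "\<dots> = (\<lambda>x. x + t) ` {1..m}" by (rule image_add_atLeastAtMost'[symmetric])
    finally show ?thesis .
  qed
  moreover have "inj (\<lambda>x::nat. x + t)" by (simp add: inj_on_def)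
  ultimately have sa: "set a = {1..m}" using inj_image_eq_iff by blast
  have pa: "is_perm m a" unfolding is_perm_def
    using sa la dist a'a by (auto simp: distinct_map)
  have pb: "is_perm t b" unfolding is_perm_def using sb lb dist by auto
  have split: "good a' \<and> good b \<and> (1 < length \<pi> \<longrightarrow> contains \<pi> [2,3,1])"
    using gd good_split[OF an bn] unfolding pd by simp
  have avs: "\<not> contains a' [1,3,2] \<and> \<not> contains b [1,3,2]"
    using av avoid_split[OF an bn ab] unfolding pd by simp
  have aS: "a \<in> S m" unfolding S_def
    using pa split avs good_map[OF oiso_add] contains_map[OF oiso_add] unfolding a'a by auto
  have bS: "b \<in> S (n - 1 - m)" unfolding S_def using pb split avs unfolding t_def by auto
  have Jeq: "J n m a b = \<pi>" unfolding J_def pd a'a t_def ..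
  have "(a, b) \<in> T n m" unfolding T_def using aS bS Jeq split ln by auto
  moreover have "m < n" using m ln by simp
  ultimately show ?thesis using Jeq by metis
qed

lemma finite_S: "finite (S k)"
proof (rule finite_subset)
  show "S k \<subseteq> {xs. set xs \<subseteq> {1..k} \<and> length xs = k}" unfolding S_def is_perm_def by auto
  show "finite {xs. set xs \<subseteq> {1..k} \<and> length xs = k}" by (rule finite_lists_length_eq) simp
qed

lemma finite_T: "finite (T n k)"
  by (rule finite_subset[of _ "S k \<times> S (n - 1 - k)"]) (auto simp: T_def finite_S)

lemma len_S: "a \<in> S k \<Longrightarrow> length a = k" unfolding S_def is_perm_def by auto

lemma S_union: "1 \<le> n \<Longrightarrow> S n = (\<Union>k<n. (\<lambda>(a, b). J n k a b) ` T n k)"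
proof (intro set_eqI iffI)
  fix \<pi> assume "1 \<le> n" "\<pi> \<in> S n"
  then show "\<pi> \<in> (\<Union>k<n. (\<lambda>(a, b). J n k a b) ` T n k)" using S_decomp by fastforce
next
  fix \<pi> assume "\<pi> \<in> (\<Union>k<n. (\<lambda>(a, b). J n k a b) ` T n k)"
  then show "\<pi> \<in> S n" using J_in_S unfolding T_def by auto
qed

lemma J_inj: "inj_on (\<lambda>(a, b). J n k a b) (T n k)"
proof (rule inj_onI, clarify)
  fix a b a2 b2 assume in1: "(a, b) \<in> T n k" and in2: "(a2, b2) \<in> T n k" and eq: "J n k a b = J n k a2 b2"
  have "length a = length a2" using in1 in2 len_S unfolding T_def by auto
  then have "map (\<lambda>x. x + (n - 1 - k)) a = map (\<lambda>x. x + (n - 1 - k)) a2 \<and> n # b = n # b2"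
    using eq unfolding J_def by (simp add: append_eq_append_conv)
  moreover have "inj (\<lambda>x::nat. x + (n - 1 - k))" by (simp add: inj_on_def)
  ultimately show "a = a2 \<and> b = b2" by (simp add: inj_map_eq_map)
qed

lemma J_nth: "a \<in> S k \<Longrightarrow> J n k a b ! k = n"
  using len_S unfolding J_def by (auto simp: nth_append)

lemma card_S_sum: "1 \<le> n \<Longrightarrow> card (S n) = (\<Sum>k<n. card (T n k))"
proof -
  assume n: "1 \<le> n"
  have "card (\<Union>k<n. (\<lambda>(a, b). J n k a b) ` T n k) = (\<Sum>k<n. card ((\<lambda>(a, b). J n k a b) ` T n k))"
  proof (rule card_UN_disjoint)
    show "\<forall>i\<in>{..<n}. finite ((\<lambda>(a, b). J n i a b) ` T n i)" using finite_T by auto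
    show "\<forall>i\<in>{..<n}. \<forall>j\<in>{..<n}. i \<noteq> j \<longrightarrow> (\<lambda>(a, b). J n i a b) ` T n i \<inter> (\<lambda>(a, b). J n j a b) ` T n j = {}"
    proof (intro ballI impI)
      fix i j assume i: "i \<in> {..<n}" and j: "j \<in> {..<n}" and ij: "i \<noteq> j"
      show "(\<lambda>(a, b). J n i a b) ` T n i \<inter> (\<lambda>(a, b). J n j a b) ` T n j = {}"
      proof (rule ccontr)
        assume "\<not> ?thesis"
        then obtain a b a2 b2 where t1: "(a, b) \<in> T n i" and t2: "(a2, b2) \<in> T n j"
          and eq: "J n i a b = J n j a2 b2" by auto
        define \<pi> where "\<pi> = J n i a b"
        have "\<pi> \<in> S n" using J_in_S t1 i unfolding \<pi>_def T_def by auto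
        then have d: "distinct \<pi>" and l: "length \<pi> = n" unfolding S_def is_perm_def by auto
        have ai: "a \<in> S i" and aj: "a2 \<in> S j" using t1 t2 unfolding T_def by auto
        have "\<pi> ! i = n" using J_nth[OF ai] unfolding \<pi>_def by blast
        moreover have "\<pi> ! j = n" using J_nth[OF aj] eq unfolding \<pi>_def by simp
        ultimately have "\<pi> ! i = n" "\<pi> ! j = n" .
        then show False using d l i j ij nth_eq_iff_index_eq by fastforce
      qed
    qed
  qed simp
  also have "\<dots> = (\<Sum>k<n. card (T n k))" by (intro sum.cong refl card_image J_inj)
  finally show ?thesis using S_union[OF n] by simp
qed

lemma S_0: "S 0 = {[]}"
  unfolding S_def is_perm_def good_def contains_def by auto

lemma S_1: "a \<in> S 1 \<Longrightarrow> a = [1]"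
proof -
  assume "a \<in> S 1"
  then have "length a = 1" "set a = {1}" unfolding S_def is_perm_def by auto
  then show ?thesis by (cases a) auto
qed

lemma contains_self_231: "contains [2,3,1] [2,3,1]"
  by (rule contains3[of 0 1 2]) (auto simp: numeral_3_eq_3 less_Suc_eq)

lemma S_231: assumes "\<pi> \<in> S k" "2 \<le> k" shows "contains \<pi> [2,3,1]"
proof -
  have ip: "is_perm k \<pi>" and gd: "good \<pi>" using assms unfolding S_def by auto
  have "k \<in> set \<pi>" using ip assms(2) unfolding is_perm_def by auto
  then obtain m where m: "m < length \<pi>" "\<pi> ! m = k" by (auto simp: in_set_conv_nth)
  have "\<forall>x\<in>set \<pi>. x \<le> \<pi> ! m" using ip m unfolding is_perm_def by auto
  then have rt: "r_tilde \<pi> m = standardize \<pi>" by (rule r_tilde_max[OF m(1)])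
  have "length (standardize \<pi>) = k" using ip unfolding standardize_def is_perm_def by simp
  then have "contains (standardize \<pi>) [2,3,1]" using gd m assms(2) rt unfolding good_def by auto
  then show ?thesis by (simp add: contains_standardize)
qed

lemma T_big: assumes "3 \<le> n" "k < n" shows "T n k = S k \<times> S (n - 1 - k)"
proof -
  have "contains (J n k a b) [2,3,1]" if a: "a \<in> S k" and b: "b \<in> S (n - 1 - k)" for a b
  proof -
    consider "2 \<le> k" | "2 \<le> n - 1 - k" | "k = 1 \<and> n - 1 - k = 1" using assms by linarith
    then show ?thesis
    proof cases
      case 1
      have "contains (map (\<lambda>x. x + (n - 1 - k)) a) [2,3,1]"
        using S_231[OF a 1] contains_map[OF oiso_add] by simp
      then show ?thesis unfolding J_def by (rule contains_append_left)
    next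
      case 2
      have "contains b [2,3,1]" by (rule S_231[OF b 2])
      then have "contains ((map (\<lambda>x. x + (n - 1 - k)) a @ [n]) @ b) [2,3,1]" by (rule contains_append_right)
      then show ?thesis unfolding J_def by simp
    next
      case 3
      then have k1: "k = 1" and t1: "n - 1 - k = 1" by auto
      then have "a = [1]" "b = [1]" using S_1 a b by auto
      moreover have "n = 3" using k1 t1 assms by arith
      ultimately have "J n k a b = J 3 1 [1] [1]" using k1 by simp
      also have "\<dots> = [2,3,1]" by (simp add: J_def)
      finally show ?thesis using contains_self_231 by simp
    qed
  qed
  then show ?thesis unfolding T_def using assms by auto
qed

lemma T_2: assumes "k < 2" shows "T 2 k = {}"
proof -
  have "\<not> contains (J 2 k a b) [2,3,1]" if "a \<in> S k" "b \<in> S (2 - 1 - k)" for a b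
  proof
    assume "contains (J 2 k a b) [2,3,1]"
    then have "3 \<le> length (J 2 k a b)" using contains_length by fastforce
    moreover have "length (J 2 k a b) \<le> 2" using len_S[OF that(1)] len_S[OF that(2)] assms unfolding J_def by auto
    ultimately show False by simp
  qed
  then show ?thesis unfolding T_def by auto
qed

lemma card_S_0: "card (S 0) = 1" by (simp add: S_0)

lemma card_S_1: "card (S 1) = 1"
proof -
  have "T 1 0 = S 0 \<times> S 0" unfolding T_def by auto
  then show ?thesis using card_S_sum[of 1] by (simp add: S_0)
qed

lemma card_S_2: "card (S 2) = 0"
proof -
  have "{..<2::nat} = {0,1}" by auto
  then show ?thesis using card_S_sum[of 2] by (simp add: T_2[of 0] T_2[of "Suc 0"])
qed

lemma card_S_rec: "3 \<le> n \<Longrightarrow> card (S n) = (\<Sum>k<n. card (S k) * card (S (n - 1 - k)))"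
  using card_S_sum[of n] by (simp add: T_big card_cartesian_product)


unbundle fps_syntax

lemma gf6_coeff:
  fixes f :: "nat \<Rightarrow> nat"
  assumes f0: "f 0 = 1" and f1: "f 1 = 1" and f2: "f 2 = 0"
    and fr: "\<And>n. n \<ge> 3 \<Longrightarrow> f n = (\<Sum>k<n. f k * f (n - 1 - k))"
    and n: "n \<ge> 1"
  shows "real (f n) = fps_nth gf6 n"
proof -
  define A :: "real fps" where "A = Abs_fps (\<lambda>n. real (f n))"
  have An: "A $ k = real (f k)" for k by (simp add: A_def)
  have sq: "(A^2) $ m = (\<Sum>k<Suc m. real (f k) * real (f (m - k)))" for m
    by (simp add: power2_eq_square fps_mult_nth An atLeast0AtMost lessThan_Suc_atMost)
  have H: "fps_X * A^2 = A - 1 + 2 * fps_X^2"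
  proof (rule fps_ext)
    fix n :: nat
    consider "n = 0" | "n = 1" | "n = 2" | "n \<ge> 3" by linarith
    then show "(fps_X * A^2) $ n = (A - 1 + 2 * fps_X^2) $ n"
    proof cases
      case 1 then show ?thesis by (simp add: An f0)
    next
      case 2 then show ?thesis using f1 by (simp add: An f0 sq fps_X_power_iff)
    next
      case 3
      have x2: "(2 * fps_X^2 :: real fps) $ 2 = 2" by (simp add: fps_X_power_iff numeral_fps_const)
      have s1: "(A^2) $ 1 = 2" using f0 f1 by (simp add: sq An)
      show ?thesis using 3 f2 x2 s1 by (simp add: An)
    next
      case 4
      then obtain m where m: "n = Suc m" by (cases n) auto
      have "real (f n) = (\<Sum>k<n. real (f k) * real (f (n - 1 - k)))"
        using fr[OF 4] by (simp flip: of_nat_mult)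
      moreover have "(2 * fps_X^2 :: real fps) $ n = 0" using 4 by (simp add: fps_X_power_iff numeral_fps_const)
      moreover have "(fps_X * A^2) $ n = (A^2) $ m" by (simp add: m)
      ultimately show ?thesis using 4 by (simp only: sq An m fps_add_nth fps_sub_nth) (simp add: m)
    qed
  qed
  define P :: "real fps" where "P = 1 - 4 * fps_X + 8 * fps_X ^ 3"
  define R :: "real fps" where "R = 1 - 2 * fps_X * A"
  have "R^2 = 1 - 4 * fps_X * A + 4 * fps_X * (fps_X * A^2)"
    unfolding R_def by (simp add: power2_eq_square algebra_simps)
  also have "\<dots> = P" unfolding H P_def by (simp add: power2_eq_square power3_eq_cube algebra_simps)
  finally have RP0: "R^2 = P" .
  have RP: "R ^ Suc 1 = P" unfolding Suc_1 by (rule RP0)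
  have P0: "P $ 0 = 1" by (simp add: P_def)
  have R0: "R $ 0 = 1" by (simp add: R_def)
  have "R = fps_radical (\<lambda>k x. root k x) (Suc 1) P"
    using radical_unique[of "\<lambda>k x. root k x" 1 P R] RP P0 R0 by simp
  then have Rr: "fps_radical (\<lambda>k x. root k x) 2 P = R" by (simp add: numeral_2_eq_2)
  have "gf6 = (1 - 2 * fps_X - R) / (2 * fps_X)" unfolding gf6_def Rr[unfolded P_def] ..
  also have "1 - 2 * fps_X - R = (2 * fps_X) * (A - 1)" unfolding R_def by (simp add: algebra_simps)
  also have "(2 * fps_X) * (A - 1) / (2 * fps_X) = A - 1"
    by (rule nonzero_mult_div_cancel_left) simp
  finally have "gf6 = A - 1" .
  then have "gf6 $ n = (A - 1) $ n" by simp
  also have "\<dots> = real (f n)" using n by (simp add: An)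
  finally show ?thesis by simp
qed


theorem corollary6:
  fixes n :: nat
  assumes "n \<ge> 1"
  shows "real (card {\<pi> \<in> Av n [1, 3, 2].
            \<forall>i<n. length (r_tilde \<pi> i) > 1 \<longrightarrow> contains (r_tilde \<pi> i) [2, 3, 1]})
         = fps_nth gf6 n"
proof -
  have "{\<pi> \<in> Av n [1, 3, 2]. \<forall>i<n. length (r_tilde \<pi> i) > 1 \<longrightarrow> contains (r_tilde \<pi> i) [2, 3, 1]} = S n"
    unfolding Av_def S_def good_def is_perm_def by auto
  moreover have "real (card (S n)) = fps_nth gf6 n"
    by (rule gf6_coeff[of "\<lambda>n. card (S n)"]) (use card_S_0 card_S_1 card_S_2 card_S_rec assms in auto)
  ultimately show ?thesis by simp
qed

end
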